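(* Let $n\ge 3$, $q=\frac{2n}{n-2}$, $\kappa=\frac{n-1}{n}$. Identify $S^1$ with $[-\pi,\pi]$ with endpoints identified, and let $\lambda=-1$ on $(-\pi,0)$, $\lambda=1$ on $(0,\pi)$. Let $N$ be a smooth positive function on $S^1$, $\gamma_N=-\frac{\int_{S^1}\lambda N}{\int_{S^1}N}$, and $t,\eta,\mu\in\mathbb{R}$ with $|t|\neq1$. For $d>0$ let $\psi_d$ and $\hat\psi_d$ be the unique positive solutions in $W^{2,\infty}(S^1)$ of, respectively, $$-2\kappa q\,d^{-2q/n}\psi_d''-2\eta^2d^{-2q}\psi_d^{-q-1}-\kappa(\mu d^{-q}+\gamma_N+\lambda)^2\psi_d^{-q-1}+\kappa(t+\lambda)^2\psi_d^{q-1}=0,$$ $$-2\kappa q\,d^{-2q/n}\hat\psi_d''-\kappa(\gamma_N+\lambda)^2\hat\psi_d^{-q-1}+\kappa(t+\lambda)^2\hat\psi_d^{q-1}=0.$$ Then there exists a constant $c>0$ such that $\|\hat\psi_d-\psi_d\|_{L^\infty(S^1)}<c\,d^{-q}$ for all sufficiently large $d$. In particular $\lim_{d\to\infty}\psi_d(0)=\lim_{d\to\infty}\hat\psi_d(0)$. *)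

theory Defs
  imports "HOL-Analysis.Analysis"
begin

text \<open>Functions on the circle S^1 = [-pi,pi] with endpoints identified are
represented as 2pi-periodic functions on the real line.\<close>

definition periodic2pi :: "(real \<Rightarrow> real) \<Rightarrow> bool" where
  "periodic2pi f \<longleftrightarrow> (\<forall>x. f (x + 2 * pi) = f x)"

text \<open>The step function lambda: -1 on (-pi,0), 1 on (0,pi) (values at 0, pi
are immaterial), extended periodically.  The representative of x in [-pi,pi) is
x - 2 pi floor((x+pi)/(2pi)).\<close>

definition lam :: "real \<Rightarrow> real" where
  "lam x = (let y = x - 2 * pi * of_int \<lfloor>(x + pi) / (2 * pi)\<rfloor>
            in if y < 0 then -1 else 1)"

definition smooth_fun :: "(real \<Rightarrow> real) \<Rightarrow> bool" where
  "smooth_fun f \<longleftrightarrow> (\<forall>k x. (deriv ^^ k) f differentiable (at x))"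

definition gammaN :: "(real \<Rightarrow> real) \<Rightarrow> real" where
  "gammaN N = - (integral {-pi..pi} (\<lambda>x. lam x * N x) / integral {-pi..pi} N)"

text \<open>f is a W^{2,infinity}(S^1) function satisfying the second-order equation
E(x, f x, f'' x) = 0 almost everywhere: f is periodic, C^1, f' is Lipschitz
(i.e. f' is in W^{1,infinity}), and its a.e. derivative f'' (the weak second
derivative) satisfies the equation a.e.\<close>

definition W2inf_solution :: "(real \<Rightarrow> real \<Rightarrow> real \<Rightarrow> bool) \<Rightarrow> (real \<Rightarrow> real) \<Rightarrow> bool" where
  "W2inf_solution E f \<longleftrightarrow> periodic2pi f \<and>
     (\<exists>f' f''. (\<forall>x. (f has_real_derivative f' x) (at x)) \<and>
              (\<exists>L. \<forall>x y. \<bar>f' x - f' y\<bar> \<le> L * \<bar>x - y\<bar>) \<and>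
              (AE x in lborel. (f' has_real_derivative f'' x) (at x)) \<and>
              (AE x in lborel. E x (f x) (f'' x)))"

end

theory Submission imports Defs begin

lemma aux_lin: fixes A B y E::"real" shows "B - A \<le> E \<Longrightarrow> y < B \<Longrightarrow> 2*E \<le> (B - y) \<Longrightarrow> y \<le> A" by linarith

lemma lip_mono:
  fixes g g'' :: "real \<Rightarrow> real"
  assumes lip: "\<forall>x y. \<bar>g x - g y\<bar> \<le> L * \<bar>x - y\<bar>"
    and ae: "AE x in lborel. x \<in> {a<..<b} \<longrightarrow> (g has_real_derivative g'' x) (at x) \<and> g'' x \<ge> 0"
    and ab: "a \<le> b"
  shows "g a \<le> g b"
proof (rule ccontr)
  assume "\<not> g a \<le> g b"
  hence gab: "g b < g a" by simp
  have L0: "L \<ge> 0" using lip[rule_format, of 1 0] by simp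
  have aLb: "a < b" using ab gab by (cases "a = b") auto
  define \<epsilon> where "\<epsilon> = (g a - g b) / (2*(b-a))"
  have \<epsilon>pos: "\<epsilon> > 0" using gab aLb by (simp add: \<epsilon>_def)
  define h where "h x = g x + \<epsilon> * x" for x
  have hba: "h b < h a"
  proof -
    have "\<epsilon> * (b - a) = (g a - g b)/2" using aLb by (simp add: \<epsilon>_def field_simps)
    thus ?thesis using gab by (simp add: h_def algebra_simps)
  qed
  have hlip: "\<bar>h y - h x\<bar> \<le> (L + \<epsilon>) * \<bar>y - x\<bar>" for x y
  proof -
    have "\<bar>h y - h x\<bar> = \<bar>(g y - g x) + \<epsilon> * (y - x)\<bar>" by (simp add: h_def algebra_simps)
    also have "\<dots> \<le> \<bar>g y - g x\<bar> + \<epsilon> * \<bar>y - x\<bar>" using \<epsilon>pos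
      by (metis abs_mult abs_of_pos abs_triangle_ineq)
    also have "\<dots> \<le> (L + \<epsilon>) * \<bar>y - x\<bar>" using lip[rule_format, of y x] by (simp add: algebra_simps)
    finally show ?thesis .
  qed
  have hcont: "continuous_on UNIV h"
    unfolding continuous_on_iff
  proof (intro ballI allI impI)
    fix x and e :: real assume "e > 0"
    show "\<exists>d>0. \<forall>y\<in>UNIV. dist y x < d \<longrightarrow> dist (h y) (h x) < e"
    proof (intro exI[of _ "e / (L + \<epsilon> + 1)"] conjI ballI impI)
      show "e / (L + \<epsilon> + 1) > 0" using \<open>e>0\<close> L0 \<epsilon>pos by simp
      fix y assume "dist y x < e / (L + \<epsilon> + 1)"
      hence "\<bar>y - x\<bar> * (L + \<epsilon> + 1) < e" using L0 \<epsilon>pos by (simp add: dist_real_def field_simps)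
      moreover have "\<bar>h y - h x\<bar> \<le> (L + \<epsilon> + 1) * \<bar>y - x\<bar>"
        using hlip[of y x] by (smt (verit) abs_ge_zero mult_right_mono)
      ultimately show "dist (h y) (h x) < e" by (simp add: dist_real_def algebra_simps)
    qed
  qed
  from ae obtain Nn where Nn: "{x \<in> space lborel. \<not> (x \<in> {a<..<b} \<longrightarrow> (g has_real_derivative g'' x) (at x) \<and> g'' x \<ge> 0)} \<subseteq> Nn"
    "emeasure lborel Nn = 0" "Nn \<in> sets lborel" by (rule AE_E)
  define Z where "Z = Nn \<union> {a,b}"
  have negN: "negligible Nn"
    using Nn(2,3) by (simp add: negligible_iff_null_sets null_sets_completionI null_setsI)
  have negZ: "negligible Z" unfolding Z_def using negN by (intro negligible_Un) auto
  have neghZ: "negligible (h ` Z)"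
  proof (rule negligible_locally_Lipschitz_image)
    show "DIM(real) \<le> DIM(real)" by simp
    show "negligible Z" by (rule negZ)
    fix x assume "x \<in> Z"
    show "\<exists>T B. open T \<and> x \<in> T \<and> (\<forall>y\<in>Z \<inter> T. norm (h y - h x) \<le> B * norm (y - x))"
      using hlip by (intro exI[of _ UNIV] exI[of _ "L + \<epsilon>"]) auto
  qed
  have sub: "{h b<..<h a} \<subseteq> h ` Z"
  proof
    fix y assume y: "y \<in> {h b<..<h a}"
    define S where "S = {a..b} \<inter> h -` {y..}"
    have clS: "closed S" unfolding S_def
      using hcont by (intro closed_Int closed_vimage) auto
    have aS: "a \<in> S" using y ab by (auto simp: S_def)
    have bddS: "bdd_above S" by (auto simp: S_def bdd_above_def)
    define x where "x = Sup S"
    have xS: "x \<in> S" unfolding x_def using closed_contains_Sup[OF _ bddS clS] aS by auto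
    have ub: "z \<in> S \<Longrightarrow> z \<le> x" for z unfolding x_def by (rule cSup_upper[OF _ bddS])
    have xab: "a \<le> x" "x \<le> b" "y \<le> h x" using xS by (auto simp: S_def)
    have xneb: "x \<noteq> b" using xab y by auto
    have hx: "h x = y"
    proof (rule ccontr)
      assume "h x \<noteq> y" hence hxy: "h x > y" using xab by simp
      define t where "t = min ((b - x)/2) ((h x - y) / (2*(L + \<epsilon>)))"
      have tpos: "t > 0" using xab xneb hxy L0 \<epsilon>pos by (simp add: t_def)
      have "\<bar>h (x+t) - h x\<bar> \<le> (L + \<epsilon>) * t" using hlip[of "x+t" x] tpos by simp
      also have "\<dots> \<le> (L + \<epsilon>) * ((h x - y) / (2*(L + \<epsilon>)))"
        using L0 \<epsilon>pos by (intro mult_left_mono) (auto simp: t_def)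
      also have "\<dots> = (h x - y)/2" using L0 \<epsilon>pos by (simp add: field_simps)
      finally have hh: "\<bar>h (x+t) - h x\<bar> \<le> (h x - y)/2" .
      hence "2 * \<bar>h (x+t) - h x\<bar> \<le> h x - y" by simp
      moreover have "h x - h (x+t) \<le> \<bar>h (x+t) - h x\<bar>" by linarith
      ultimately have "h (x+t) \<ge> y" using hxy aux_lin by blast
      moreover have "x + t \<le> b"
      proof -
        have "t \<le> (b - x)/2" unfolding t_def by (rule min.cobounded1)
        hence "2 * t \<le> b - x" by simp
        thus ?thesis using xab by linarith
      qed
      ultimately have "x + t \<in> S" using xab tpos by (simp add: S_def)
      thus False using ub tpos by fastforce
    qed
    have xin: "x \<in> {a<..<b}" using hx y xab xneb by (cases "x = a") auto
    have "x \<in> Nn"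
    proof (rule ccontr)
      assume "x \<notin> Nn"
      hence "(g has_real_derivative g'' x) (at x) \<and> g'' x \<ge> 0" using Nn(1) xin by auto
      hence dh: "(h has_real_derivative (g'' x + \<epsilon>)) (at x)" unfolding h_def
        by (auto intro!: derivative_eq_intros)
      have "g'' x + \<epsilon> > 0" using \<open>_ \<and> g'' x \<ge> 0\<close> \<epsilon>pos by simp
      from DERIV_pos_inc_right[OF dh this] obtain d where d: "d > 0" "\<And>t. 0 < t \<Longrightarrow> t < d \<Longrightarrow> h x < h (x + t)"
        by blast
      define t where "t = min (d/2) ((b - x)/2)"
      have t1: "t \<le> d/2" "t \<le> (b - x)/2" unfolding t_def by (rule min.cobounded1, rule min.cobounded2)
      have "t > 0" using d xin by (auto simp: t_def)
      moreover have "t < d" using t1 d by simp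
      moreover have "x + t \<le> b" using t1 xin by simp
      ultimately have "t > 0" "t < d" "x + t \<le> b" by auto
      hence "x + t \<in> S" using d(2)[of t] hx xab by (auto simp: S_def)
      thus False using ub \<open>t > 0\<close> by fastforce
    qed
    thus "y \<in> h ` Z" using hx by (auto simp: Z_def)
  qed
  have "negligible {h b<..<h a}" using negligible_subset[OF neghZ sub] .
  thus False using hba negligible_interval(2)[of "h b" "h a"] by (simp add: box_real)
qed

lemma max_princ:
  fixes w w' w'' :: "real \<Rightarrow> real"
  assumes per: "\<forall>x. w (x + 2*pi) = w x"
    and d1: "\<forall>x. (w has_real_derivative w' x) (at x)"
    and lip: "\<forall>x y. \<bar>w' x - w' y\<bar> \<le> L * \<bar>x - y\<bar>"
    and d2: "AE x in lborel. (w' has_real_derivative w'' x) (at x)"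
    and pos: "AE x in lborel. w x > c \<longrightarrow> w'' x > 0"
  shows "w x1 \<le> c"
proof (rule ccontr)
  assume "\<not> w x1 \<le> c" hence wx1: "w x1 > c" by simp
  have cont: "continuous_on UNIV w"
    using d1 by (intro continuous_at_imp_continuous_on) (auto intro: DERIV_isCont)
  obtain x0 where x0: "x0 \<in> {x1-2*pi..x1+2*pi}" "\<forall>y\<in>{x1-2*pi..x1+2*pi}. w y \<le> w x0"
  proof -
    have "{x1-2*pi..x1+2*pi} \<noteq> {}" using pi_gt_zero by simp
    moreover have "continuous_on {x1-2*pi..x1+2*pi} w" using continuous_on_subset[OF cont] by blast
    ultimately show ?thesis using continuous_attains_sup[OF compact_Icc] that by blast
  qed
  have "\<exists>x2 \<in> {x1-2*pi<..<x1+2*pi}. w x2 = w x0"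
  proof (cases "x0 = x1 - 2*pi \<or> x0 = x1 + 2*pi")
    case True
    have "w x1 = w (x1 - 2*pi)" using per[rule_format, of "x1 - 2*pi"] by simp
    moreover have "w (x1 + 2*pi) = w x1" using per by simp
    ultimately show ?thesis using True pi_gt_zero by (intro bexI[of _ x1]) auto
  next
    case False
    hence "x0 \<in> {x1-2*pi<..<x1+2*pi}" using x0(1) by auto
    thus ?thesis by blast
  qed
  then obtain x2 where x2: "x2 \<in> {x1-2*pi<..<x1+2*pi}" "w x2 = w x0" by blast
  define M where "M = w x2"
  have "w x1 \<le> w x0" using x0(2)[rule_format, of x1] pi_gt_zero by simp
  hence Mc: "M > c" using x2 wx1 by (auto simp: M_def)
  define \<delta>0 where "\<delta>0 = 2*pi - \<bar>x2 - x1\<bar>"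
  have \<delta>0: "\<delta>0 > 0" using x2 by (auto simp: \<delta>0_def)
  have leM: "\<bar>y - x2\<bar> < \<delta>0 \<Longrightarrow> w y \<le> M" for y
  proof -
    assume "\<bar>y - x2\<bar> < \<delta>0"
    hence "\<bar>y - x1\<bar> < 2*pi" unfolding \<delta>0_def by linarith
    hence "x1 - 2*pi \<le> y \<and> y \<le> x1 + 2*pi" by (simp add: abs_less_iff)
    thus "w y \<le> M" using x0(2)[rule_format, of y] x2 by (auto simp: M_def)
  qed
  have "eventually (\<lambda>y. w y > c) (at x2)"
    using Mc DERIV_isCont[OF d1[rule_format, of x2]] unfolding M_def isCont_def
    by (intro order_tendstoD) auto
  then obtain \<delta>1 where \<delta>1: "\<delta>1 > 0" "\<And>y. y \<noteq> x2 \<Longrightarrow> dist y x2 < \<delta>1 \<Longrightarrow> w y > c"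
    unfolding eventually_at by blast
  have gtc: "\<bar>y - x2\<bar> < \<delta>1 \<Longrightarrow> w y > c" for y
    using \<delta>1(2)[of y] Mc by (cases "y = x2") (auto simp: M_def dist_real_def)
  define h where "h = min \<delta>0 \<delta>1 / 2"
  have h: "h > 0" "h < \<delta>0" "h < \<delta>1" using \<delta>0 \<delta>1 by (auto simp: h_def)
  have w'x2: "w' x2 = 0"
  proof (rule DERIV_local_max[OF d1[rule_format, of x2] \<delta>0])
    show "\<forall>y. \<bar>x2 - y\<bar> < \<delta>0 \<longrightarrow> w y \<le> w x2" using leM by (auto simp: M_def abs_minus_commute)
  qed
  have w'nn: "w' x \<ge> 0" if "x2 \<le> x" "x \<le> x2 + h" for x
  proof -
    have "w' x2 \<le> w' x"
    proof (rule lip_mono[OF lip _ that(1)])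
      show "AE y in lborel. y \<in> {x2<..<x} \<longrightarrow> (w' has_real_derivative w'' y) (at y) \<and> w'' y \<ge> 0"
        using d2 pos
      proof eventually_elim
        case (elim y)
        show ?case
        proof
          assume "y \<in> {x2<..<x}"
          hence "\<bar>y - x2\<bar> < \<delta>1" using that h by auto
          thus "(w' has_real_derivative w'' y) (at y) \<and> w'' y \<ge> 0" using elim gtc[of y] by auto
        qed
      qed
    qed
    thus ?thesis using w'x2 by simp
  qed
  have wM: "w x = M" if "x2 \<le> x" "x \<le> x2 + h" for x
  proof -
    have "w x2 \<le> w x"
      by (rule DERIV_nonneg_imp_nondecreasing[OF that(1)]) (use d1 w'nn that in auto)
    moreover have "w x \<le> M" using leM[of x] that h by auto
    ultimately show ?thesis by (simp add: M_def)
  qed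
  have "AE x in lborel. x \<notin> {x2<..<x2+h}"
    using d2 pos
  proof eventually_elim
    case (elim x)
    show ?case
    proof
      assume xin: "x \<in> {x2<..<x2+h}"
      define e where "e = min (x - x2) (x2 + h - x)"
      have e: "e > 0" using xin by (auto simp: e_def)
      have near: "\<bar>x - y\<bar> < e \<Longrightarrow> y \<in> {x2<..<x2+h}" for y using xin by (auto simp: e_def)
      have w'0: "w' y = 0" if "y \<in> {x2<..<x2+h}" for y
      proof (rule DERIV_local_max[OF d1[rule_format, of y]])
        show "min (y - x2) (x2 + h - y) > 0" using that by auto
        show "\<forall>z. \<bar>y - z\<bar> < min (y - x2) (x2 + h - y) \<longrightarrow> w z \<le> w y"
          using wM that by auto
      qed
      have "w'' x = 0"
      proof (rule DERIV_local_max[where f=w' and x=x and d=e])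
        show "(w' has_real_derivative w'' x) (at x)" using elim by simp
        show "e > 0" by (rule e)
        show "\<forall>y. \<bar>x - y\<bar> < e \<longrightarrow> w' y \<le> w' x" using near w'0 xin by auto
      qed
      moreover have "w x > c" using gtc[of x] xin h by auto
      ultimately show False using elim by auto
    qed
  qed
  hence "emeasure lborel {x2<..<x2+h} = 0"
    by (subst (asm) AE_iff_measurable[of "{x2<..<x2+h}"]) auto
  thus False using h by simp
qed

lemma powr_mvt_bound:
  fixes U V Lb p :: real
  assumes "Lb > 0" "V \<ge> Lb" "U > V" "p \<ge> 1"
  shows "U powr p - V powr p \<ge> p * Lb powr (p-1) * (U - V)"
proof -
  obtain z where z: "V < z" "z < U" "U powr p - V powr p = (U - V) * (p * z powr (p - 1))"
    using MVT2[OF assms(3), of "\<lambda>z. z powr p" "\<lambda>z. p * z powr (p-1)"] assms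
      has_real_derivative_powr by force
  have "Lb powr (p-1) \<le> z powr (p-1)" using assms z by (intro powr_mono2) auto
  hence "p * Lb powr (p-1) \<le> p * z powr (p-1)" using assms by simp
  hence "p * Lb powr (p-1) * (U - V) \<le> p * z powr (p-1) * (U - V)"
    using assms by (intro mult_right_mono) auto
  thus ?thesis using z by (simp add: algebra_simps)
qed

lemma split_powr:
  fixes v q :: real assumes "v > 0"
  shows "v powr (q-1) = v powr (-q-1) * v powr (2*q)"
proof -
  have "v powr (q-1) = v powr ((-q-1) + 2*q)" by simp
  thus ?thesis by (simp only: powr_add)
qed

lemma neg_point:
  fixes v q b A Alo Bhi :: real
  assumes v: "v > 0" and vL: "v < (Alo/Bhi) powr (1/(2*q))" and q: "q > 0"
    and b: "0 \<le> b" "b \<le> Bhi" and A: "A \<ge> Alo" and Alo: "Alo > 0" and Bhi: "Bhi > 0"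
  shows "b * v powr (q-1) - A * v powr (-q-1) < 0"
proof -
  have "v powr (2*q) < ((Alo/Bhi) powr (1/(2*q))) powr (2*q)"
    using v vL q by (intro powr_less_mono2) auto
  also have "\<dots> = Alo/Bhi" using q Alo Bhi by (simp add: powr_powr)
  finally have vq: "v powr (2*q) < Alo/Bhi" .
  have "b * v powr (2*q) \<le> Bhi * v powr (2*q)" using b by (intro mult_right_mono) auto
  also have "\<dots> < Bhi * (Alo/Bhi)" using mult_strict_left_mono[OF vq Bhi] .
  also have "\<dots> = Alo" using Bhi by simp
  finally have "b * v powr (2*q) - A < 0" using A by simp
  hence "v powr (-q-1) * (b * v powr (2*q) - A) < 0"
    using v by (intro mult_pos_neg) auto
  thus ?thesis using split_powr[OF v, of q] by (simp add: algebra_simps)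
qed

lemma lower_bound:
  fixes u u' u'' B At :: "real \<Rightarrow> real"
  assumes per: "\<forall>x. u (x + 2*pi) = u x"
    and d1: "\<forall>x. (u has_real_derivative u' x) (at x)"
    and lip: "\<forall>x y. \<bar>u' x - u' y\<bar> \<le> L * \<bar>x - y\<bar>"
    and d2: "AE x in lborel. (u' has_real_derivative u'' x) (at x)"
    and upos: "\<forall>x. u x > 0"
    and eq: "AE x in lborel. a * u'' x = B x * u x powr (q-1) - At x * u x powr (-q-1)"
    and a: "a > 0" and q: "q > 0"
    and Bb: "\<forall>x. 0 \<le> B x \<and> B x \<le> Bhi" and Ab: "\<forall>x. At x \<ge> Alo"
    and Alo: "Alo > 0" and Bhi: "Bhi > 0"
  shows "u x \<ge> (Alo/Bhi) powr (1/(2*q))"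
proof -
  have "- u x \<le> - ((Alo/Bhi) powr (1/(2*q)))"
  proof (rule max_princ[where w = "\<lambda>x. - u x" and w' = "\<lambda>x. - u' x" and w'' = "\<lambda>x. - u'' x" and L = L])
    show "\<forall>x. - u (x + 2*pi) = - u x" using per by simp
    show "\<forall>x. ((\<lambda>x. - u x) has_real_derivative - u' x) (at x)"
      using d1 by (auto intro: derivative_intros)
    show "\<forall>x y. \<bar>- u' x - - u' y\<bar> \<le> L * \<bar>x - y\<bar>"
    proof (intro allI)
      fix x y
      have "\<bar>- u' x - - u' y\<bar> = \<bar>u' x - u' y\<bar>" by linarith
      thus "\<bar>- u' x - - u' y\<bar> \<le> L * \<bar>x - y\<bar>" using lip by simp
    qed
    show "AE x in lborel. ((\<lambda>x. - u' x) has_real_derivative - u'' x) (at x)"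
      using d2 by eventually_elim (auto intro: derivative_intros)
    show "AE x in lborel. - u x > - ((Alo/Bhi) powr (1/(2*q))) \<longrightarrow> - u'' x > 0"
      using eq
    proof eventually_elim
      case (elim x)
      show ?case
      proof
        assume "- u x > - ((Alo/Bhi) powr (1/(2*q)))"
        hence "B x * u x powr (q-1) - At x * u x powr (-q-1) < 0"
          using upos Bb Ab Alo Bhi q by (intro neg_point[where Alo=Alo and Bhi=Bhi]) auto
        hence "a * u'' x < 0" using elim by simp
        thus "- u'' x > 0" using a by (simp add: mult_less_0_iff)
      qed
    qed
  qed
  thus ?thesis by simp
qed

lemma pos_point:
  fixes U V Lb q b b0 A1 A2 E :: real
  assumes Lb: "Lb > 0" and VL: "V \<ge> Lb" and UL: "U \<ge> Lb" and q: "q \<ge> 2"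
    and b: "b \<ge> b0" and b0: "b0 > 0" and A2: "A2 \<ge> 0" and AE: "\<bar>A1 - A2\<bar> \<le> E"
    and gap: "U - V > E * Lb powr (-q-1) / (b0 * (q-1) * Lb powr (q-2))"
  shows "(b * U powr (q-1) - A1 * U powr (-q-1)) - (b * V powr (q-1) - A2 * V powr (-q-1)) > 0"
proof -
  define m where "m = b0 * (q-1) * Lb powr (q-2)"
  have m: "m > 0" using b0 q Lb by (simp add: m_def)
  have E0: "E \<ge> 0" using AE by linarith
  have gap': "m * (U - V) > E * Lb powr (-q-1)"
    using gap m by (simp add: m_def[symmetric] pos_divide_less_eq mult.commute)
  have UV: "U > V"
  proof -
    have "E * Lb powr (-q-1) / m \<ge> 0" using E0 m by simp
    thus ?thesis using gap by (simp add: m_def)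
  qed
  have "U powr (q-1) - V powr (q-1) \<ge> (q-1) * Lb powr (q-1-1) * (U - V)"
    using powr_mvt_bound[OF Lb VL UV, of "q-1"] q by simp
  hence "b * (U powr (q-1) - V powr (q-1)) \<ge> b * ((q-1) * Lb powr (q-2) * (U - V))"
    using b b0 by (intro mult_left_mono) (auto simp: algebra_simps)
  moreover have "b * ((q-1) * Lb powr (q-2) * (U - V)) \<ge> b0 * ((q-1) * Lb powr (q-2) * (U - V))"
    using b q UV by (intro mult_right_mono) auto
  ultimately have t1: "b * (U powr (q-1) - V powr (q-1)) \<ge> m * (U - V)" by (simp add: m_def algebra_simps)
  have "U powr (-q-1) \<le> V powr (-q-1)" using UV VL Lb q by (intro powr_mono2') auto
  hence t2: "A2 * (V powr (-q-1) - U powr (-q-1)) \<ge> 0" using A2 by simp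
  have Upl: "U powr (-q-1) \<le> Lb powr (-q-1)" using UL Lb q by (intro powr_mono2') auto
  have "(A2 - A1) * U powr (-q-1) \<ge> - E * U powr (-q-1)"
    using AE by (intro mult_right_mono) auto
  moreover have "- E * U powr (-q-1) \<ge> - E * Lb powr (-q-1)" using Upl E0 by (simp add: mult_left_mono)
  ultimately have t3: "(A2 - A1) * U powr (-q-1) \<ge> - E * Lb powr (-q-1)" by linarith
  have "(b * U powr (q-1) - A1 * U powr (-q-1)) - (b * V powr (q-1) - A2 * V powr (-q-1))
     = b * (U powr (q-1) - V powr (q-1)) + A2 * (V powr (-q-1) - U powr (-q-1)) + (A2 - A1) * U powr (-q-1)"
    by (simp add: algebra_simps)
  thus ?thesis using t1 t2 t3 gap' by linarith
qed

lemma compare1: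
  fixes u u' u'' v v' v'' B A1 A2 :: "real \<Rightarrow> real"
  assumes peru: "\<forall>x. u (x + 2*pi) = u x"
    and d1u: "\<forall>x. (u has_real_derivative u' x) (at x)"
    and lipu: "\<forall>x y. \<bar>u' x - u' y\<bar> \<le> Lu * \<bar>x - y\<bar>"
    and d2u: "AE x in lborel. (u' has_real_derivative u'' x) (at x)"
    and perv: "\<forall>x. v (x + 2*pi) = v x"
    and d1v: "\<forall>x. (v has_real_derivative v' x) (at x)"
    and lipv: "\<forall>x y. \<bar>v' x - v' y\<bar> \<le> Lv * \<bar>x - y\<bar>"
    and d2v: "AE x in lborel. (v' has_real_derivative v'' x) (at x)"
    and equ: "AE x in lborel. a * u'' x = B x * u x powr (q-1) - A1 x * u x powr (-q-1)"
    and eqv: "AE x in lborel. a * v'' x = B x * v x powr (q-1) - A2 x * v x powr (-q-1)"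
    and uL: "\<forall>x. u x \<ge> Lb" and vL: "\<forall>x. v x \<ge> Lb" and Lb: "Lb > 0" and a: "a > 0"
    and q: "q \<ge> 2" and Bb: "\<forall>x. B x \<ge> b0" and b0: "b0 > 0" and A2: "\<forall>x. A2 x \<ge> 0"
    and AE: "\<forall>x. \<bar>A1 x - A2 x\<bar> \<le> E"
  shows "u x - v x \<le> E * Lb powr (-q-1) / (b0 * (q-1) * Lb powr (q-2))"
proof -
  have "u x - v x \<le> E * Lb powr (-q-1) / (b0 * (q-1) * Lb powr (q-2))"
  proof (rule max_princ[where w = "\<lambda>x. u x - v x" and w' = "\<lambda>x. u' x - v' x" and w'' = "\<lambda>x. u'' x - v'' x" and L = "Lu + Lv"])
    show "\<forall>x. u (x + 2*pi) - v (x + 2*pi) = u x - v x" using peru perv by simp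
    show "\<forall>x. ((\<lambda>x. u x - v x) has_real_derivative u' x - v' x) (at x)"
      using d1u d1v by (auto intro: derivative_intros)
    show "\<forall>x y. \<bar>(u' x - v' x) - (u' y - v' y)\<bar> \<le> (Lu + Lv) * \<bar>x - y\<bar>"
    proof (intro allI)
      fix x y
      have "\<bar>(u' x - v' x) - (u' y - v' y)\<bar> \<le> \<bar>u' x - u' y\<bar> + \<bar>v' x - v' y\<bar>" by linarith
      thus "\<bar>(u' x - v' x) - (u' y - v' y)\<bar> \<le> (Lu + Lv) * \<bar>x - y\<bar>"
        using lipu[rule_format, of x y] lipv[rule_format, of x y] by (simp add: distrib_right)
    qed
    show "AE x in lborel. ((\<lambda>x. u' x - v' x) has_real_derivative u'' x - v'' x) (at x)"
      using d2u d2v by eventually_elim (auto intro: derivative_intros)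
    show "AE x in lborel. u x - v x > E * Lb powr (-q-1) / (b0 * (q-1) * Lb powr (q-2)) \<longrightarrow> u'' x - v'' x > 0"
      using equ eqv
    proof eventually_elim
      case (elim x)
      show ?case
      proof
        assume gp: "u x - v x > E * Lb powr (-q-1) / (b0 * (q-1) * Lb powr (q-2))"
        have "(B x * u x powr (q-1) - A1 x * u x powr (-q-1)) - (B x * v x powr (q-1) - A2 x * v x powr (-q-1)) > 0"
          by (rule pos_point[of Lb "v x" "u x" q b0 "B x" "A2 x" "A1 x" E]) (use uL vL Lb q Bb b0 A2 AE gp in auto)
        hence "a * (u'' x - v'' x) > 0" using elim by (simp add: algebra_simps)
        thus "u'' x - v'' x > 0" using a by (simp add: zero_less_mult_iff)
      qed
    qed
  qed
  thus ?thesis by simp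
qed

lemma lam_vals: "lam x = -1 \<or> lam x = 1"
  unfolding lam_def Let_def by auto

lemma lam_pos: assumes "0 \<le> x" "x < pi" shows "lam x = 1"
proof -
  have "\<lfloor>(x + pi) / (2 * pi)\<rfloor> = 0" using assms pi_gt_zero
    by (simp add: floor_eq_iff field_simps)
  thus ?thesis using assms unfolding lam_def Let_def by simp
qed

lemma lam_neg: assumes "-pi \<le> x" "x < 0" shows "lam x = -1"
proof -
  have "\<lfloor>(x + pi) / (2 * pi)\<rfloor> = 0" using assms pi_gt_zero
    by (simp add: floor_eq_iff field_simps)
  thus ?thesis using assms unfolding lam_def Let_def by simp
qed

lemma integral_pos_cont:
  fixes f :: "real \<Rightarrow> real"
  assumes "continuous_on {a..b} f" "a < b" "\<forall>x. f x > 0"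
  shows "integral {a..b} f > 0"
proof -
  obtain x0 where x0: "x0 \<in> {a..b}" "\<forall>y\<in>{a..b}. f x0 \<le> f y"
    using continuous_attains_inf[OF compact_Icc _ assms(1)] assms(2) by auto
  have "integral {a..b} (\<lambda>x. f x0) \<le> integral {a..b} f"
    by (rule integral_le) (use x0 assms integrable_continuous_interval in auto)
  moreover have "integral {a..b} (\<lambda>x. f x0) = (b - a) * f x0" using assms by simp
  moreover have "(b - a) * f x0 > 0" using assms by simp
  ultimately show ?thesis by linarith
qed

lemma gamma_bound:
  fixes N :: "real \<Rightarrow> real"
  assumes cont: "continuous_on UNIV N" and pos: "\<forall>x. N x > 0"
  shows "\<bar>gammaN N\<bar> < 1"
proof -
  have cN: "continuous_on {a..b} N" for a b using continuous_on_subset[OF cont] by blast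
  define Jm where "Jm = integral {-pi..0} N"
  define Jp where "Jp = integral {0..pi} N"
  have Jm: "Jm > 0" unfolding Jm_def using cN pos by (intro integral_pos_cont) auto
  have Jp: "Jp > 0" unfolding Jp_def using cN pos by (intro integral_pos_cont) auto
  have I0: "integral {-pi..pi} N = Jm + Jp"
    unfolding Jm_def Jp_def
    by (rule Henstock_Kurzweil_Integration.integral_combine[symmetric]) (use integrable_continuous_interval[OF cN] pi_gt_zero in auto)
  have sm: "x \<in> {-pi..0} - {0} \<Longrightarrow> lam x * N x = - N x" for x using lam_neg[of x] by auto
  have sp: "x \<in> {0..pi} - {pi} \<Longrightarrow> lam x * N x = N x" for x using lam_pos[of x] by auto
  have im: "(\<lambda>x. lam x * N x) integrable_on {-pi..0}"
    by (rule integrable_spike[OF _ negligible_sing sm]) (use cN integrable_continuous_interval integrable_neg in blast)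
  have ip: "(\<lambda>x. lam x * N x) integrable_on {0..pi}"
    by (rule integrable_spike[OF _ negligible_sing sp]) (use cN integrable_continuous_interval in blast)
  have em: "integral {-pi..0} (\<lambda>x. lam x * N x) = - Jm"
  proof -
    have "integral {-pi..0} (\<lambda>x. - N x) = integral {-pi..0} (\<lambda>x. lam x * N x)"
      by (rule integral_spike[OF negligible_sing sm])
    thus ?thesis by (simp add: Jm_def)
  qed
  have ep: "integral {0..pi} (\<lambda>x. lam x * N x) = Jp"
  proof -
    have "integral {0..pi} N = integral {0..pi} (\<lambda>x. lam x * N x)"
      by (rule integral_spike[OF negligible_sing sp])
    thus ?thesis by (simp add: Jp_def)
  qed
  have I1: "integral {-pi..pi} (\<lambda>x. lam x * N x) = Jp - Jm"
  proof -
    have "(\<lambda>x. lam x * N x) integrable_on {-pi..pi}"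
      by (rule Henstock_Kurzweil_Integration.integrable_combine[OF _ _ im ip]) auto
    hence "integral {-pi..0} (\<lambda>x. lam x * N x) + integral {0..pi} (\<lambda>x. lam x * N x) = integral {-pi..pi} (\<lambda>x. lam x * N x)"
      by (intro Henstock_Kurzweil_Integration.integral_combine) auto
    thus ?thesis using em ep by simp
  qed
  have g: "gammaN N = - ((Jp - Jm) / (Jm + Jp))" unfolding gammaN_def I0 I1 by (rule refl)
  have pos: "Jm + Jp > 0" using Jm Jp by simp
  have "(Jp - Jm) / (Jm + Jp) < 1" using Jm pos by (simp add: divide_less_eq)
  moreover have "(Jp - Jm) / (Jm + Jp) > -1" using Jp pos by (simp add: less_divide_eq)
  ultimately show ?thesis unfolding g by linarith
qed

lemma ptwise_B:
  fixes \<kappa> t l :: real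
  assumes l: "l = -1 \<or> l = 1" and k: "\<kappa> > 0" and t: "\<bar>t\<bar> \<noteq> 1"
  shows "\<kappa>*(t+l)^2 \<ge> \<kappa>*(\<bar>\<bar>t\<bar> - 1\<bar>)^2" "\<kappa>*(t+l)^2 \<le> \<kappa>*(\<bar>t\<bar>+1)^2" "0 \<le> \<kappa>*(t+l)^2"
proof -
  have "\<bar>\<bar>t\<bar> - 1\<bar> \<le> \<bar>t + l\<bar>" using l by (cases "t \<ge> 0") auto
  hence "(\<bar>\<bar>t\<bar> - 1\<bar>)^2 \<le> (t+l)^2" by (metis abs_le_square_iff power2_abs)
  thus "\<kappa>*(t+l)^2 \<ge> \<kappa>*(\<bar>\<bar>t\<bar> - 1\<bar>)^2" using k by simp
  have "\<bar>t + l\<bar> \<le> \<bar>\<bar>t\<bar>+1\<bar>" using l by (cases "t \<ge> 0") auto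
  hence "(t+l)^2 \<le> (\<bar>t\<bar>+1)^2" by (metis abs_le_square_iff)
  thus "\<kappa>*(t+l)^2 \<le> \<kappa>*(\<bar>t\<bar>+1)^2" using k by simp
  show "0 \<le> \<kappa>*(t+l)^2" using k by simp
qed

lemma ptwise_A:
  fixes \<kappa> g l \<mu> s \<eta> :: real
  assumes l: "l = -1 \<or> l = 1" and k: "\<kappa> > 0" and g: "\<bar>g\<bar> < 1" and s: "0 \<le> s" "s \<le> 1"
    and ms: "\<bar>\<mu>\<bar> * s \<le> (1 - \<bar>g\<bar>)/2"
  shows "\<kappa>*(g+l)^2 \<ge> \<kappa>*((1-\<bar>g\<bar>)/2)^2"
    and "2*\<eta>^2*(s* s) + \<kappa>*(\<mu>* s + g + l)^2 \<ge> \<kappa>*((1-\<bar>g\<bar>)/2)^2"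
    and "\<bar>(2*\<eta>^2*(s* s) + \<kappa>*(\<mu>* s + g + l)^2) - \<kappa>*(g+l)^2\<bar> \<le> (2*\<eta>^2 + \<kappa>*\<mu>^2 + 2*\<kappa>*\<bar>\<mu>\<bar>*(\<bar>g\<bar>+1)) * s"
proof -
  define \<delta> where "\<delta> = (1-\<bar>g\<bar>)/2"
  have \<delta>: "\<delta> > 0" using g by (simp add: \<delta>_def)
  have gl: "\<bar>g + l\<bar> \<ge> 2*\<delta>" using l g by (cases "g \<ge> 0") (auto simp: \<delta>_def)
  have gl2: "\<bar>g + l\<bar> \<le> \<bar>g\<bar> + 1" using l by auto
  have "\<bar>\<delta>\<bar> \<le> \<bar>g + l\<bar>" using gl \<delta> by simp
  hence "\<delta>^2 \<le> (g+l)^2" by (metis abs_le_square_iff)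
  thus "\<kappa>*(g+l)^2 \<ge> \<kappa>*((1-\<bar>g\<bar>)/2)^2" using k by (simp add: \<delta>_def)
  have "\<bar>\<mu>* s\<bar> \<le> \<delta>" using ms s by (simp add: \<delta>_def abs_mult)
  hence "\<bar>\<mu>* s + g + l\<bar> \<ge> \<delta>" using gl by linarith
  hence "\<bar>\<delta>\<bar> \<le> \<bar>\<mu>* s + g + l\<bar>" using \<delta> by simp
  hence "\<delta>^2 \<le> (\<mu>* s + g + l)^2" by (metis abs_le_square_iff)
  hence "\<kappa>*\<delta>^2 \<le> \<kappa>*(\<mu>* s + g + l)^2" using k by simp
  moreover have "0 \<le> 2*\<eta>^2*(s* s)" using s by simp
  ultimately show "2*\<eta>^2*(s* s) + \<kappa>*(\<mu>* s + g + l)^2 \<ge> \<kappa>*((1-\<bar>g\<bar>)/2)^2"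
    unfolding \<delta>_def by linarith
  have eq: "(2*\<eta>^2*(s* s) + \<kappa>*(\<mu>* s + g + l)^2) - \<kappa>*(g+l)^2
      = 2*\<eta>^2*(s* s) + \<kappa>*\<mu>^2*(s* s) + 2*\<kappa>*\<mu>* s*(g+l)"
    by (simp add: power2_eq_square algebra_simps)
  have ss: "s* s \<le> s" using s by (simp add: mult_le_cancel_right1 mult_right_le_one_le)
  have t1: "2*\<eta>^2*(s* s) \<le> 2*\<eta>^2* s" using ss by (simp add: mult_left_mono)
  have t2: "\<kappa>*\<mu>^2*(s* s) \<le> \<kappa>*\<mu>^2* s" using ss k by (simp add: mult_left_mono)
  have "\<bar>2*\<kappa>*\<mu>* s*(g+l)\<bar> = 2*\<kappa>*\<bar>\<mu>\<bar>* s*\<bar>g+l\<bar>" using k s by (simp add: abs_mult)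
  also have "\<dots> \<le> 2*\<kappa>*\<bar>\<mu>\<bar>* s*(\<bar>g\<bar>+1)" using gl2 k s by (intro mult_left_mono) auto
  finally have t3: "\<bar>2*\<kappa>*\<mu>* s*(g+l)\<bar> \<le> 2*\<kappa>*\<bar>\<mu>\<bar>*(\<bar>g\<bar>+1)* s" by (simp add: algebra_simps)
  have "\<bar>2*\<eta>^2*(s* s) + \<kappa>*\<mu>^2*(s* s) + 2*\<kappa>*\<mu>* s*(g+l)\<bar>
      \<le> 2*\<eta>^2*(s* s) + \<kappa>*\<mu>^2*(s* s) + \<bar>2*\<kappa>*\<mu>* s*(g+l)\<bar>"
    using s k by (simp add: abs_triangle_ineq4 order_trans[OF abs_triangle_ineq])
  also have "\<dots> \<le> 2*\<eta>^2* s + \<kappa>*\<mu>^2* s + 2*\<kappa>*\<bar>\<mu>\<bar>*(\<bar>g\<bar>+1)* s" using t1 t2 t3 by linarith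
  also have "\<dots> = (2*\<eta>^2 + \<kappa>*\<mu>^2 + 2*\<kappa>*\<bar>\<mu>\<bar>*(\<bar>g\<bar>+1)) * s" by (simp add: algebra_simps)
  finally show "\<bar>(2*\<eta>^2*(s* s) + \<kappa>*(\<mu>* s + g + l)^2) - \<kappa>*(g+l)^2\<bar> \<le> (2*\<eta>^2 + \<kappa>*\<mu>^2 + 2*\<kappa>*\<bar>\<mu>\<bar>*(\<bar>g\<bar>+1)) * s"
    unfolding eq .
qed

theorem proposition3p26:
  fixes n :: nat and q \<kappa> t \<eta> \<mu> :: real
    and N :: "real \<Rightarrow> real"
    and \<psi> \<psi>h :: "real \<Rightarrow> real \<Rightarrow> real"
  assumes n3: "n \<ge> 3"
    and q_def: "q = 2 * real n / (real n - 2)"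
    and kappa_def: "\<kappa> = (real n - 1) / real n"
    and N_per: "periodic2pi N" and N_smooth: "smooth_fun N" and N_pos: "\<forall>x. N x > 0"
    and t_ne: "\<bar>t\<bar> \<noteq> 1"
    and psi_pos: "\<forall>d>0. \<forall>x. \<psi> d x > 0"
    and psi_sol: "\<forall>d>0. W2inf_solution
        (\<lambda>x u u''. - 2 * \<kappa> * q * d powr (- 2 * q / real n) * u''
           - 2 * \<eta>\<^sup>2 * d powr (- 2 * q) * u powr (- q - 1)
           - \<kappa> * (\<mu> * d powr (- q) + gammaN N + lam x)\<^sup>2 * u powr (- q - 1)
           + \<kappa> * (t + lam x)\<^sup>2 * u powr (q - 1) = 0) (\<psi> d)"
    and psih_pos: "\<forall>d>0. \<forall>x. \<psi>h d x > 0"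
    and psih_sol: "\<forall>d>0. W2inf_solution
        (\<lambda>x u u''. - 2 * \<kappa> * q * d powr (- 2 * q / real n) * u''
           - \<kappa> * (gammaN N + lam x)\<^sup>2 * u powr (- q - 1)
           + \<kappa> * (t + lam x)\<^sup>2 * u powr (q - 1) = 0) (\<psi>h d)"
  shows "(\<exists>c>0. \<forall>\<^sub>F d in at_top. \<forall>x. \<bar>\<psi>h d x - \<psi> d x\<bar> < c * d powr (- q))
       \<and> (\<forall>L. ((\<lambda>d. \<psi> d 0) \<longlongrightarrow> L) at_top \<longleftrightarrow> ((\<lambda>d. \<psi>h d 0) \<longlongrightarrow> L) at_top)"
proof -
  define g where "g = gammaN N"
  have n0: "real n > 2" using n3 by simp
  have q2: "q > 2" unfolding q_def using n0 by (simp add: field_simps)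
  have k0: "\<kappa> > 0" unfolding kappa_def using n0 by simp
  have Ncont: "continuous_on UNIV N"
  proof (intro continuous_at_imp_continuous_on ballI)
    fix x
    have "((deriv ^^ 0) N) differentiable (at x)" using N_smooth unfolding smooth_fun_def by blast
    thus "isCont N x" by (simp add: differentiable_imp_continuous_within)
  qed
  have g1: "\<bar>g\<bar> < 1" unfolding g_def by (rule gamma_bound[OF Ncont N_pos])
  define \<delta> where "\<delta> = (1 - \<bar>g\<bar>)/2"
  have \<delta>: "\<delta> > 0" using g1 by (simp add: \<delta>_def)
  define e where "e = \<bar>\<bar>t\<bar> - 1\<bar>"
  have e: "e > 0" using t_ne by (simp add: e_def)
  define Alo where "Alo = \<kappa> * \<delta>^2"
  define Bhi where "Bhi = \<kappa> * (\<bar>t\<bar> + 1)^2"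
  define b0 where "b0 = \<kappa> * e^2"
  define C0 where "C0 = 2*\<eta>^2 + \<kappa>*\<mu>^2 + 2*\<kappa>*\<bar>\<mu>\<bar>*(\<bar>g\<bar>+1)"
  define s0 where "s0 = min 1 (\<delta> / (\<bar>\<mu>\<bar> + 1))"
  have Alo: "Alo > 0" using k0 \<delta> by (simp add: Alo_def)
  have Bhi: "Bhi > 0" using k0 by (simp add: Bhi_def)
  have b0: "b0 > 0" using k0 e by (simp add: b0_def)
  have s0: "s0 > 0" using \<delta> by (simp add: s0_def)
  define Lb where "Lb = (Alo/Bhi) powr (1/(2*q))"
  have Lb: "Lb > 0" using Alo Bhi by (simp add: Lb_def)
  define m where "m = b0 * (q-1) * Lb powr (q-2)"
  have m: "m > 0" using b0 q2 Lb by (simp add: m_def)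
  define K0 where "K0 = C0 * Lb powr (-q-1) / m"
  have C0: "C0 \<ge> 0" using k0 by (simp add: C0_def)
  have K0: "K0 \<ge> 0" using C0 m by (simp add: K0_def)
  have key: "\<bar>\<psi>h d x - \<psi> d x\<bar> \<le> K0 * d powr (-q)" if d: "d > 0" "d powr (-q) \<le> s0" for d x
  proof -
    define s where "s = d powr (-q)"
    have sp: "s > 0" using d by (simp add: s_def)
    have s1: "s \<le> 1" "s \<le> \<delta> / (\<bar>\<mu>\<bar> + 1)" using d by (auto simp: s_def s0_def)
    have ms: "\<bar>\<mu>\<bar> * s \<le> (1 - \<bar>g\<bar>)/2"
    proof -
      have "(\<bar>\<mu>\<bar> + 1) * s \<le> \<delta>" using s1 by (simp add: pos_le_divide_eq mult.commute)
      moreover have "\<bar>\<mu>\<bar> * s \<le> (\<bar>\<mu>\<bar> + 1) * s" using sp by simp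
      ultimately show ?thesis by (simp add: \<delta>_def)
    qed
    have ss: "d powr (- 2 * q) = s * s" unfolding s_def using d
      by (simp add: powr_add[symmetric])
    have ss2: "d powr (-(2 * q)) = s * s" using ss by simp
    define a where "a = 2 * \<kappa> * q * d powr (- 2 * q / real n)"
    have a: "a > 0" using k0 q2 d by (simp add: a_def)
    define B where "B x = \<kappa> * (t + lam x)\<^sup>2" for x
    define Ah where "Ah x = \<kappa> * (gammaN N + lam x)\<^sup>2" for x
    define Ap where "Ap x = 2 * \<eta>\<^sup>2 * d powr (- 2 * q) + \<kappa> * (\<mu> * d powr (- q) + gammaN N + lam x)\<^sup>2" for x
    have Bb: "\<forall>x. 0 \<le> B x \<and> B x \<le> Bhi" "\<forall>x. B x \<ge> b0"
      using ptwise_B[OF lam_vals k0 t_ne] by (auto simp: B_def Bhi_def b0_def e_def)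
    have Ahb2: "\<forall>x. Ah x \<ge> 0" using k0 by (simp add: Ah_def)
    have Ahb1: "\<forall>x. Ah x \<ge> Alo"
      using ptwise_A(1)[OF lam_vals k0 g1 _ s1(1) ms] sp Alo
      by (auto simp: Ah_def Alo_def \<delta>_def g_def)
    have Apb: "\<forall>x. Ap x \<ge> Alo"
      using ptwise_A(2)[OF lam_vals k0 g1 _ s1(1) ms, of \<eta>] sp
      by (auto simp: Ap_def Alo_def \<delta>_def g_def ss ss2 s_def[symmetric])
    have AE: "\<forall>x. \<bar>Ap x - Ah x\<bar> \<le> C0 * s"
      using ptwise_A(3)[OF lam_vals k0 g1 _ s1(1) ms, of \<eta>] sp
      by (auto simp: Ap_def Ah_def C0_def g_def ss ss2 s_def[symmetric])
    define EP where "EP = (\<lambda>x u u''. - 2 * \<kappa> * q * d powr (- 2 * q / real n) * u''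
           - 2 * \<eta>\<^sup>2 * d powr (- 2 * q) * u powr (- q - 1)
           - \<kappa> * (\<mu> * d powr (- q) + gammaN N + lam x)\<^sup>2 * u powr (- q - 1)
           + \<kappa> * (t + lam x)\<^sup>2 * u powr (q - 1) = 0)"
    define EH where "EH = (\<lambda>x u u''. - 2 * \<kappa> * q * d powr (- 2 * q / real n) * u''
           - \<kappa> * (gammaN N + lam x)\<^sup>2 * u powr (- q - 1)
           + \<kappa> * (t + lam x)\<^sup>2 * u powr (q - 1) = 0)"
    have WP: "W2inf_solution EP (\<psi> d)" unfolding EP_def using psi_sol d(1) by blast
    have WH: "W2inf_solution EH (\<psi>h d)" unfolding EH_def using psih_sol d(1) by blast
    from WP obtain p1 p2 L1 where
      P: "\<forall>x. \<psi> d (x + 2*pi) = \<psi> d x" "\<forall>x. (\<psi> d has_real_derivative p1 x) (at x)"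
         "\<forall>x y. \<bar>p1 x - p1 y\<bar> \<le> L1 * \<bar>x - y\<bar>" "AE x in lborel. (p1 has_real_derivative p2 x) (at x)"
      and Peq: "AE x in lborel. EP x (\<psi> d x) (p2 x)"
      unfolding W2inf_solution_def periodic2pi_def by blast
    from WH obtain h1 h2 L2 where
      H: "\<forall>x. \<psi>h d (x + 2*pi) = \<psi>h d x" "\<forall>x. (\<psi>h d has_real_derivative h1 x) (at x)"
         "\<forall>x y. \<bar>h1 x - h1 y\<bar> \<le> L2 * \<bar>x - y\<bar>" "AE x in lborel. (h1 has_real_derivative h2 x) (at x)"
      and Heq: "AE x in lborel. EH x (\<psi>h d x) (h2 x)"
      unfolding W2inf_solution_def periodic2pi_def by blast
    have Peq': "AE x in lborel. a * p2 x = B x * \<psi> d x powr (q-1) - Ap x * \<psi> d x powr (-q-1)"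
      using Peq by eventually_elim (simp add: EP_def a_def B_def Ap_def algebra_simps)
    have Heq': "AE x in lborel. a * h2 x = B x * \<psi>h d x powr (q-1) - Ah x * \<psi>h d x powr (-q-1)"
      using Heq by eventually_elim (simp add: EH_def a_def B_def Ah_def algebra_simps)
    have Lp: "\<forall>x. \<psi> d x \<ge> Lb" unfolding Lb_def
      using lower_bound[OF P(1-4) _ Peq' a _ Bb(1) Apb Alo Bhi] psi_pos d(1) q2 by auto
    have Lh: "\<forall>x. \<psi>h d x \<ge> Lb" unfolding Lb_def
      using lower_bound[OF H(1-4) _ Heq' a _ Bb(1) Ahb1 Alo Bhi] psih_pos d(1) q2 by auto
    have AE': "\<forall>x. \<bar>Ah x - Ap x\<bar> \<le> C0 * s" using AE by (simp add: abs_minus_commute)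
    have Apnn: "\<forall>x. Ap x \<ge> 0"
    proof
      fix x show "Ap x \<ge> 0" using Apb[rule_format, of x] Alo by linarith
    qed
    have c1: "\<psi>h d x - \<psi> d x \<le> C0 * s * Lb powr (-q-1) / (b0 * (q-1) * Lb powr (q-2))"
      by (rule compare1[OF H(1-4) P(1-4) Heq' Peq' Lh Lp Lb a _ Bb(2) b0 Apnn AE']) (use q2 in simp)
    have c2: "\<psi> d x - \<psi>h d x \<le> C0 * s * Lb powr (-q-1) / (b0 * (q-1) * Lb powr (q-2))"
      by (rule compare1[OF P(1-4) H(1-4) Peq' Heq' Lp Lh Lb a _ Bb(2) b0 Ahb2 AE]) (use q2 in simp)
    have "C0 * s * Lb powr (-q-1) / (b0 * (q-1) * Lb powr (q-2)) = K0 * s"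
      by (simp add: K0_def m_def)
    thus ?thesis using c1 c2 by (simp add: s_def abs_le_iff)
  qed
  have lim0: "((\<lambda>d. d powr (-q)) \<longlongrightarrow> 0) at_top"
    using q2 by (intro tendsto_neg_powr filterlim_ident) auto
  have ev: "\<forall>\<^sub>F d in at_top. d > 0 \<and> d powr (-q) \<le> s0"
    using eventually_gt_at_top[of 0] order_tendstoD(2)[OF lim0 s0]
    by eventually_elim auto
  define c where "c = K0 + 1"
  have c: "c > 0" using K0 by (simp add: c_def)
  have part1: "\<forall>\<^sub>F d in at_top. \<forall>x. \<bar>\<psi>h d x - \<psi> d x\<bar> < c * d powr (- q)"
    using ev
  proof eventually_elim
    case (elim d)
    show ?case
    proof
      fix x
      have "K0 * d powr (-q) < c * d powr (-q)" using elim by (simp add: c_def)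
      thus "\<bar>\<psi>h d x - \<psi> d x\<bar> < c * d powr (- q)" using key[of d x] elim by linarith
    qed
  qed
  have diff0: "((\<lambda>d. \<psi>h d 0 - \<psi> d 0) \<longlongrightarrow> 0) at_top"
  proof (rule Lim_null_comparison)
    show "\<forall>\<^sub>F d in at_top. norm (\<psi>h d 0 - \<psi> d 0) \<le> c * d powr (- q)"
      using part1 by eventually_elim (auto simp: less_imp_le)
    show "((\<lambda>d. c * d powr (- q)) \<longlongrightarrow> 0) at_top"
      using tendsto_mult[OF tendsto_const lim0, of c] by simp
  qed
  have part2: "((\<lambda>d. \<psi> d 0) \<longlongrightarrow> L) at_top \<longleftrightarrow> ((\<lambda>d. \<psi>h d 0) \<longlongrightarrow> L) at_top" for L
  proof
    assume "((\<lambda>d. \<psi> d 0) \<longlongrightarrow> L) at_top"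
    from tendsto_add[OF this diff0] show "((\<lambda>d. \<psi>h d 0) \<longlongrightarrow> L) at_top" by simp
  next
    assume "((\<lambda>d. \<psi>h d 0) \<longlongrightarrow> L) at_top"
    from tendsto_diff[OF this diff0] show "((\<lambda>d. \<psi> d 0) \<longlongrightarrow> L) at_top" by simp
  qed
  show ?thesis using part1 part2 c by blast
qed

end
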